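(* Let $T$ be a tree on at least three vertices and let $S \subseteq V(T)$ satisfy conditions (I) and (II) below. Then every vertex $v \in S$ lies on a path between two leaves $\ell, \ell' \in S$. (I) $S$ contains at least one leaf of $T$. (II) For every leaf $\ell \in S$, every edge $\{a,b\}$ of $T$ with $a$ closer to $\ell$ than $b$ satisfies: (i) if $a,b\notin S$ then $N(b)\cap S=\emptyset$; (ii) if $a\notin S$, $b\in S$ then $|N(b)\cap S|\le 1$; (iii) if $a\in S$, $b\notin S$ then $|(N(b)\cap S)\setminus\{a\}|=1$; (iv) if $a,b\in S$ then $|(N(b)\cap S)\setminus\{a\}|=0$.
   Context: $N(b)$ is the set of neighbors of $b$; distances are graph distances in $T$; a leaf is a vertex of degree one. *)

theory Defs
  imports Main
begin

definition gwalk :: "'a set set \<Rightarrow> 'a list \<Rightarrow> bool" where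
  "gwalk E p \<longleftrightarrow> p \<noteq> [] \<and> (\<forall>i. Suc i < length p \<longrightarrow> {p ! i, p ! Suc i} \<in> E)"

definition gpath :: "'a set set \<Rightarrow> 'a list \<Rightarrow> bool" where
  "gpath E p \<longleftrightarrow> gwalk E p \<and> distinct p"

definition simple_graph :: "'a set \<Rightarrow> 'a set set \<Rightarrow> bool" where
  "simple_graph V E \<longleftrightarrow> finite V \<and>
     (\<forall>e\<in>E. \<exists>u v. e = {u, v} \<and> u \<noteq> v \<and> u \<in> V \<and> v \<in> V)"

definition gconnected :: "'a set \<Rightarrow> 'a set set \<Rightarrow> bool" where
  "gconnected V E \<longleftrightarrow> (\<forall>u\<in>V. \<forall>v\<in>V. \<exists>p. gpath E p \<and> hd p = u \<and> last p = v)"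

definition gacyclic :: "'a set set \<Rightarrow> bool" where
  "gacyclic E \<longleftrightarrow> \<not> (\<exists>c. gpath E c \<and> length c \<ge> 3 \<and> {last c, hd c} \<in> E)"

definition is_tree :: "'a set \<Rightarrow> 'a set set \<Rightarrow> bool" where
  "is_tree V E \<longleftrightarrow> simple_graph V E \<and> V \<noteq> {} \<and> gconnected V E \<and> gacyclic E"

definition nbrs :: "'a set set \<Rightarrow> 'a \<Rightarrow> 'a set" where
  "nbrs E b = {x. {b, x} \<in> E}"

definition is_leaf :: "'a set \<Rightarrow> 'a set set \<Rightarrow> 'a \<Rightarrow> bool" where
  "is_leaf V E v \<longleftrightarrow> v \<in> V \<and> card (nbrs E v) = 1"

definition gdist :: "'a set set \<Rightarrow> 'a \<Rightarrow> 'a \<Rightarrow> nat" where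
  "gdist E u v = (LEAST n. \<exists>p. gwalk E p \<and> hd p = u \<and> last p = v \<and> length p = Suc n)"

end

theory Submission
  imports Defs
begin

lemma gwalk_single[simp]: "gwalk E [x]"
  by (simp add: gwalk_def)

lemma gwalk_Cons2: "gwalk E (x # y # p) \<longleftrightarrow> {x,y} \<in> E \<and> gwalk E (y # p)"
proof
  assume h: "gwalk E (x # y # p)"
  have "{x,y} \<in> E" using h unfolding gwalk_def by (metis Suc_less_eq length_Cons nth_Cons_0 nth_Cons_Suc zero_less_Suc)
  moreover have "gwalk E (y # p)" using h unfolding gwalk_def
    by (metis Suc_less_eq length_Cons list.distinct(1) nth_Cons_Suc)
  ultimately show "{x,y} \<in> E \<and> gwalk E (y # p)" by blast
next
  assume h: "{x,y} \<in> E \<and> gwalk E (y # p)"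
  show "gwalk E (x # y # p)" unfolding gwalk_def
  proof (intro conjI allI impI)
    fix i assume i: "Suc i < length (x # y # p)"
    show "{(x # y # p) ! i, (x # y # p) ! Suc i} \<in> E"
    proof (cases i)
      case 0 then show ?thesis using h by simp
    next
      case (Suc j) then show ?thesis using h i unfolding gwalk_def by auto
    qed
  qed simp
qed

lemma gwalk_nonempty: "gwalk E p \<Longrightarrow> p \<noteq> []" by (simp add: gwalk_def)

lemma walk_append: "gwalk E p \<Longrightarrow> gwalk E q \<Longrightarrow> {last p, hd q} \<in> E \<Longrightarrow> gwalk E (p @ q)"
proof (induction p rule: induct_list012)
  case 1 then show ?case by (simp add: gwalk_def)
next
  case (2 x) then show ?case using gwalk_nonempty[of E q]
    by (cases q) (auto simp: gwalk_Cons2)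
next
  case (3 x y zs) then show ?case by (auto simp: gwalk_Cons2)
qed

lemma walk_join: "gwalk E p \<Longrightarrow> gwalk E q \<Longrightarrow> last p = hd q \<Longrightarrow> gwalk E (p @ tl q)"
proof (induction p rule: induct_list012)
  case 1 then show ?case by (simp add: gwalk_def)
next
  case (2 x) then show ?case using gwalk_nonempty[of E q]
    by (cases q) auto
next
  case (3 x y zs) then show ?case by (auto simp: gwalk_Cons2)
qed

lemma last_join: "p \<noteq> [] \<Longrightarrow> q \<noteq> [] \<Longrightarrow> last p = hd q \<Longrightarrow> last (p @ tl q) = last q"
  by (cases q) auto

lemma walk_rev: "gwalk E p \<Longrightarrow> gwalk E (rev p)"
proof (induction p rule: induct_list012)
  case 1 then show ?case by (simp add: gwalk_def)
next
  case (2 x) then show ?case by simp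
next
  case (3 x y zs)
  then have "gwalk E (rev (y # zs))" "{x,y} \<in> E" by (auto simp: gwalk_Cons2)
  then show ?case using walk_append[of E "rev (y#zs)" "[x]"] by (simp add: insert_commute)
qed

lemma walk_take: "gwalk E p \<Longrightarrow> 0 < n \<Longrightarrow> gwalk E (take n p)"
  unfolding gwalk_def by (simp add: take_eq_Nil)

lemma walk_drop: "gwalk E p \<Longrightarrow> n < length p \<Longrightarrow> gwalk E (drop n p)"
  unfolding gwalk_def by (simp add: add.commute)

lemma walk_to_path: "gwalk E p \<Longrightarrow> \<exists>q. gpath E q \<and> hd q = hd p \<and> last q = last p \<and> set q \<subseteq> set p"
proof (induction "length p" arbitrary: p rule: less_induct)
  case less
  show ?case
  proof (cases "distinct p")
    case True then show ?thesis using less.prems by (auto simp: gpath_def)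
  next
    case False
    then obtain i0 j0 where ij0: "i0 < length p" "j0 < length p" "i0 \<noteq> j0" "p ! i0 = p ! j0"
      by (auto simp: distinct_conv_nth)
    obtain i j where ij: "i < j" "j < length p" "p ! i = p ! j"
    proof (cases "i0 < j0")
      case True then show ?thesis using that ij0 by blast
    next
      case False then show ?thesis using that[of j0 i0] ij0 by simp
    qed
    have pne: "p \<noteq> []" using ij by auto
    define p' where "p' = take (Suc i) p @ tl (drop j p)"
    have w1: "gwalk E (take (Suc i) p)" using walk_take less.prems by blast
    have w2: "gwalk E (drop j p)" using walk_drop less.prems ij by blast
    have l1: "last (take (Suc i) p) = p ! i" using ij
      by (simp add: take_Suc_conv_app_nth)
    have h2: "hd (drop j p) = p ! j" using ij by (simp add: hd_drop_conv_nth)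
    have wp: "gwalk E p'" unfolding p'_def using walk_join[OF w1 w2] l1 h2 ij pne by simp
    have len: "length p' < length p" unfolding p'_def using ij by auto
    have hdp: "hd p' = hd p" unfolding p'_def using pne by simp
    have lp: "last p' = last p" unfolding p'_def
      using last_join[of "take (Suc i) p" "drop j p"] l1 h2 ij pne by simp
    have sp: "set p' \<subseteq> set p" unfolding p'_def
      using set_take_subset[of "Suc i" p] set_drop_subset[of j p] list.set_sel(2)[of "drop j p"]
      by (cases "drop j p") auto
    from less.hyps[OF len wp] obtain q where "gpath E q" "hd q = hd p'" "last q = last p'" "set q \<subseteq> set p'" by blast
    then show ?thesis using hdp lp sp by (intro exI[of _ q]) auto
  qed
qed


lemma edge_props: "simple_graph V E \<Longrightarrow> {a,b} \<in> E \<Longrightarrow> a \<noteq> b \<and> a \<in> V \<and> b \<in> V"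
  unfolding simple_graph_def by (metis doubleton_eq_iff)

lemma D1: assumes "gwalk E p" "hd p = l" "last p = x"
  shows "\<exists>q. gwalk E q \<and> hd q = l \<and> last q = x \<and> length q = Suc (gdist E l x)"
proof -
  have ex: "\<exists>n. \<exists>p. gwalk E p \<and> hd p = l \<and> last p = x \<and> length p = Suc n"
    using assms gwalk_nonempty[of E p] by (intro exI[of _ "length p - 1"] exI[of _ p]) auto
  show ?thesis unfolding gdist_def using LeastI_ex[OF ex] by blast
qed

lemma D2: assumes "gwalk E p" "hd p = l" "last p = x"
  shows "Suc (gdist E l x) \<le> length p"
proof -
  have "gdist E l x \<le> length p - 1" unfolding gdist_def
    using assms gwalk_nonempty[of E p] by (intro Least_le exI[of _ p]) auto
  then show ?thesis using gwalk_nonempty[OF assms(1)] by (cases p) auto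
qed

lemma D0: "gdist E l l = 0"
  using D2[of E "[l]" l l] by simp

lemma D3: assumes "gwalk E p" "hd p = l" "last p = x" "{x,y} \<in> E"
  shows "gdist E l y \<le> gdist E l x + 1"
proof -
  obtain q where q: "gwalk E q" "hd q = l" "last q = x" "length q = Suc (gdist E l x)"
    using D1[OF assms(1-3)] by blast
  have "gwalk E (q @ [y])" using walk_append[of E q "[y]"] q assms(4) by simp
  moreover have "hd (q @ [y]) = l" using q gwalk_nonempty[of E q] by simp
  ultimately have "Suc (gdist E l y) \<le> length (q @ [y])" using D2 by (metis last_snoc)
  then show ?thesis using q by simp
qed

lemma Dzero: assumes "gwalk E p" "hd p = l" "last p = x" "gdist E l x = 0"
  shows "x = l"
proof -
  obtain q where q: "gwalk E q" "hd q = l" "last q = x" "length q = Suc (gdist E l x)"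
    using D1[OF assms(1-3)] by blast
  then obtain a where "q = [a]" using assms(4) by (cases q) auto
  then show ?thesis using q by simp
qed

lemma Dprefix: assumes "gwalk E p" "hd p = l" "i < length p"
  shows "gdist E l (p ! i) \<le> i"
proof -
  have "gwalk E (take (Suc i) p)" using walk_take assms by blast
  moreover have "hd (take (Suc i) p) = l" using assms by (cases p) auto
  moreover have "last (take (Suc i) p) = p ! i" using assms by (simp add: take_Suc_conv_app_nth)
  ultimately have "Suc (gdist E l (p ! i)) \<le> length (take (Suc i) p)" by (rule D2)
  then show ?thesis using assms by simp
qed

lemma Dgeo: assumes "gwalk E p" "hd p = l" "length p = Suc (gdist E l (last p))" "i < length p"
  shows "gdist E l (p ! i) = i"
proof -
  have "i \<le> gdist E l (p ! i)"
  proof -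
    have t: "gwalk E (take (Suc i) p)" using walk_take assms by blast
    have th: "hd (take (Suc i) p) = l" using assms by (cases p) auto
    have tl: "last (take (Suc i) p) = p ! i" using assms by (simp add: take_Suc_conv_app_nth)
    obtain r where r: "gwalk E r" "hd r = l" "last r = p ! i" "length r = Suc (gdist E l (p ! i))"
      using D1[OF t th tl] by blast
    have dw: "gwalk E (drop i p)" using walk_drop assms by blast
    have dh: "hd (drop i p) = p ! i" using assms by (simp add: hd_drop_conv_nth)
    have w: "gwalk E (r @ tl (drop i p))" using walk_join[OF r(1) dw] r dh by simp
    have wh: "hd (r @ tl (drop i p)) = l" using r gwalk_nonempty[of E r] by simp
    have wl: "last (r @ tl (drop i p)) = last p"
      using last_join[of r "drop i p"] r dh assms gwalk_nonempty[of E r] by simp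
    have "Suc (gdist E l (last p)) \<le> length (r @ tl (drop i p))" using D2[OF w wh wl] .
    then show ?thesis using assms r by simp
  qed
  then show ?thesis using Dprefix[OF assms(1,2,4)] by simp
qed

lemma walk_in_V: assumes "simple_graph V E" "gwalk E p" "hd p \<in> V" shows "set p \<subseteq> V"
proof
  fix x assume "x \<in> set p"
  then obtain i where i: "i < length p" "x = p ! i" by (metis in_set_conv_nth)
  show "x \<in> V"
  proof (cases i)
    case 0 then show ?thesis using i assms by (simp add: hd_conv_nth)
  next
    case (Suc j)
    then have "{p ! j, p ! i} \<in> E" using assms(2) i unfolding gwalk_def by simp
    then show ?thesis using edge_props[OF assms(1)] i by blast
  qed
qed

lemma Kcycle:
  assumes sg: "simple_graph V E" and ac: "gacyclic E"
    and r1: "gwalk E p1" "hd p1 = l" "last p1 = w1"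
    and r2: "gwalk E p2" "hd p2 = l" "last p2 = w2"
    and e1: "{x,w1} \<in> E" and e2: "{x,w2} \<in> E" and ne: "w1 \<noteq> w2"
    and d1: "gdist E l w1 \<le> gdist E l x" and d2: "gdist E l w2 \<le> gdist E l x"
  shows False
proof -
  have avoid: "x \<notin> set P" if P: "gwalk E P" "hd P = l" "last P = w" "length P = Suc (gdist E l w)"
    and ew: "{x,w} \<in> E" and dw: "gdist E l w \<le> gdist E l x" for P w
  proof
    assume "x \<in> set P"
    then obtain i where i: "i < length P" "x = P ! i" by (metis in_set_conv_nth)
    have "gdist E l x \<le> i" using Dprefix[OF P(1,2) i(1)] i by simp
    then have "i = length P - 1" using i P dw by simp
    moreover have "P \<noteq> []" using P by auto
    ultimately have "x = w" using i P last_conv_nth[of P] by simp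
    then show False using edge_props[OF sg ew] by simp
  qed
  obtain P1 where P1: "gwalk E P1" "hd P1 = l" "last P1 = w1" "length P1 = Suc (gdist E l w1)"
    using D1[OF r1] by blast
  obtain P2 where P2: "gwalk E P2" "hd P2 = l" "last P2 = w2" "length P2 = Suc (gdist E l w2)"
    using D1[OF r2] by blast
  have x1: "x \<notin> set P1" using avoid[OF P1 e1 d1] .
  have x2: "x \<notin> set P2" using avoid[OF P2 e2 d2] .
  have n1: "P1 \<noteq> []" "P2 \<noteq> []" using P1 P2 by auto
  define W where "W = rev P1 @ tl P2"
  have Ww: "gwalk E W" unfolding W_def using walk_join[OF walk_rev[OF P1(1)] P2(1)] P1 P2 n1
    by (simp add: last_rev)
  have Wh: "hd W = w1" unfolding W_def using P1 n1 by (simp add: hd_rev)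
  have Wl: "last W = w2" unfolding W_def using last_join[of "rev P1" P2] P1 P2 n1 by (simp add: last_rev)
  have Wx: "x \<notin> set W" unfolding W_def using x1 x2 list.set_sel(2)[of P2] n1 by auto
  obtain Q where Q: "gpath E Q" "hd Q = w1" "last Q = w2" "set Q \<subseteq> set W"
    using walk_to_path[OF Ww] Wh Wl by blast
  have Qne: "Q \<noteq> []" using Q(1) by (simp add: gpath_def gwalk_def)
  have Qlen: "length Q \<ge> 2"
  proof (rule ccontr)
    assume "\<not> length Q \<ge> 2"
    then have "Q = [hd Q]" using Qne by (cases Q) (auto simp: Suc_le_eq)
    then show False using Q ne by (metis last.simps list.sel(1))
  qed
  have Qx: "x \<notin> set Q" using Q Wx by blast
  define c where "c = Q @ [x]"
  have cw: "gwalk E c" unfolding c_def using walk_append[of E Q "[x]"] Q e2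
    by (simp add: gpath_def insert_commute)
  have cd: "distinct c" unfolding c_def using Q Qx by (simp add: gpath_def)
  have cl: "length c \<ge> 3" unfolding c_def using Qlen by simp
  have ce: "{last c, hd c} \<in> E" unfolding c_def using Q Qne e1 by simp
  show False using ac cw cd cl ce unfolding gacyclic_def gpath_def by blast
qed


context
  fixes V :: "'a set" and E :: "'a set set" and S :: "'a set" and l :: 'a
  assumes sg: "simple_graph V E" and con: "gconnected V E" and ac: "gacyclic E"
    and SV: "S \<subseteq> V" and lS: "l \<in> S" and ll: "is_leaf V E l"
    and iii: "\<And>a b. {a,b} \<in> E \<Longrightarrow> gdist E l a < gdist E l b \<Longrightarrow> a \<in> S \<Longrightarrow> b \<notin> S
               \<Longrightarrow> card ((nbrs E b \<inter> S) - {a}) = 1"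
begin

lemma reach: assumes "x \<in> V" shows "\<exists>p. gwalk E p \<and> hd p = l \<and> last p = x"
  using con assms ll unfolding gconnected_def gpath_def is_leaf_def by blast

lemma Kc: assumes "{x,w1} \<in> E" "{x,w2} \<in> E" "w1 \<noteq> w2"
  "gdist E l w1 \<le> gdist E l x" "gdist E l w2 \<le> gdist E l x" shows False
proof -
  have "w1 \<in> V" using edge_props[OF sg assms(1)] by simp
  then obtain p1 where p1: "gwalk E p1" "hd p1 = l" "last p1 = w1"
    using reach by blast
  have "w2 \<in> V" using edge_props[OF sg assms(2)] by simp
  then obtain p2 where p2: "gwalk E p2" "hd p2 = l" "last p2 = w2"
    using reach by blast
  show False using Kcycle[OF sg ac p1 p2 assms] .
qed

lemma Dup: assumes "{x,y} \<in> E" shows "gdist E l y \<le> gdist E l x + 1"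
proof -
  have "x \<in> V" using edge_props[OF sg assms] by simp
  then obtain p where p: "gwalk E p" "hd p = l" "last p = x" using reach by blast
  show ?thesis using D3[OF p assms] .
qed

lemma lenbound: assumes "gwalk E p" "hd p = l" "\<forall>i<length p. gdist E l (p ! i) = i"
  shows "distinct p" "length p \<le> card V"
proof -
  show d: "distinct p" unfolding distinct_conv_nth
  proof (intro allI impI)
    fix i j assume ij: "i < length p" "j < length p" "i \<noteq> j"
    show "p ! i \<noteq> p ! j"
    proof
      assume "p ! i = p ! j"
      then have "gdist E l (p ! i) = gdist E l (p ! j)" by simp
      then show False using assms(3) ij by simp
    qed
  qed
  have "set p \<subseteq> V" using walk_in_V[OF sg assms(1)] assms(2) ll unfolding is_leaf_def by simp
  then have "card (set p) \<le> card V" using sg unfolding simple_graph_def by (simp add: card_mono)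
  then show "length p \<le> card V" using distinct_card[OF d] by simp
qed

lemma extend:
  assumes "gwalk E p" "hd p = l" "last p \<in> S" "\<forall>i<length p. gdist E l (p ! i) = i"
  shows "\<exists>q. gwalk E q \<and> hd q = l \<and> is_leaf V E (last q) \<and> last q \<in> S \<and>
            (\<forall>i<length q. gdist E l (q ! i) = i) \<and> length q \<ge> 2 \<and> set p \<subseteq> set q"
  using assms
proof (induction "card V - length p" arbitrary: p rule: less_induct)
  case less
  let ?d = "gdist E l"
  define u where "u = last p"
  define k where "k = length p - 1"
  have pne: "p \<noteq> []" using gwalk_nonempty[OF less.prems(1)] .
  have du: "?d u = k" unfolding u_def k_def using less.prems(4) pne last_conv_nth[of p] by simp
  have uS: "u \<in> S" using less.prems u_def by simp
  have uV: "u \<in> V" using uS SV by blast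
  have step: "\<exists>q. gwalk E q \<and> hd q = l \<and> is_leaf V E (last q) \<and> last q \<in> S \<and>
            (\<forall>i<length q. ?d (q ! i) = i) \<and> length q \<ge> 2 \<and> set p \<subseteq> set q"
    if p1: "gwalk E p1" "hd p1 = l" "last p1 \<in> S" "\<forall>i<length p1. ?d (p1 ! i) = i"
       and lp1: "length p1 > length p" and sp1: "set p \<subseteq> set p1" for p1
  proof -
    have "length p1 \<le> card V" using lenbound[OF p1(1,2,4)] by simp
    then have "card V - length p1 < card V - length p" using lp1 by simp
    from less.hyps[OF this p1] obtain q where "gwalk E q \<and> hd q = l \<and> is_leaf V E (last q) \<and> last q \<in> S \<and>
            (\<forall>i<length q. ?d (q ! i) = i) \<and> length q \<ge> 2 \<and> set p1 \<subseteq> set q" by blast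
    then show ?thesis using sp1 by (intro exI[of _ q]) auto
  qed
  show ?case
  proof (cases "length p \<ge> 2 \<and> is_leaf V E u")
    case True then show ?thesis using less.prems u_def by (intro exI[of _ p]) auto
  next
    case False
    obtain c where c: "{u,c} \<in> E" "?d c = k + 1"
    proof (cases "length p \<ge> 2")
      case True
      then have nl: "\<not> is_leaf V E u" using False by simp
      define par where "par = p ! (k - 1)"
      have "{p ! (k-1), p ! Suc (k-1)} \<in> E" using less.prems(1) True unfolding gwalk_def k_def by simp
      moreover have "Suc (k-1) = k" using True k_def by simp
      moreover have "p ! k = u" unfolding u_def k_def using last_conv_nth[of p] pne by simp
      ultimately have epar: "{u, par} \<in> E" unfolding par_def
        by (simp add: insert_commute)
      have dpar: "?d par = k - 1" unfolding par_def using less.prems(4) True k_def by simp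
      have "nbrs E u \<noteq> {par}" using nl uV unfolding is_leaf_def by auto
      moreover have "par \<in> nbrs E u" using epar unfolding nbrs_def by simp
      ultimately obtain c where c: "c \<in> nbrs E u" "c \<noteq> par" by blast
      have ec: "{u,c} \<in> E" using c unfolding nbrs_def by simp
      have "\<not> ?d c \<le> ?d u" using Kc[OF epar ec] c dpar du by auto
      moreover have "?d c \<le> ?d u + 1" using Dup[OF ec] .
      ultimately show ?thesis using that ec du by simp
    next
      case False
      then have "length p = 1" using pne by (cases p) (auto simp: Suc_le_eq)
      then have ul: "u = l" "k = 0" using less.prems(2) pne unfolding u_def k_def by (cases p; simp)+
      have "card (nbrs E l) = 1" using ll unfolding is_leaf_def by simp
      then obtain c where "c \<in> nbrs E l" by (metis card_1_singletonE singletonI)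
      then have ec: "{u,c} \<in> E" unfolding nbrs_def ul by simp
      have "?d c \<noteq> 0"
      proof
        assume z: "?d c = 0"
        obtain pc where pc: "gwalk E pc" "hd pc = l" "last pc = c"
          using reach edge_props[OF sg ec] by meson
        have "c = l" using Dzero[OF pc z] .
        then show False using edge_props[OF sg ec] ul by simp
      qed
      moreover have "?d c \<le> ?d u + 1" using Dup[OF ec] .
      ultimately show ?thesis using that ec du ul by simp
    qed
    define p1 where "p1 = p @ [c]"
    have w1: "gwalk E p1" unfolding p1_def using walk_append[of E p "[c]"] less.prems c u_def by simp
    have h1: "hd p1 = l" unfolding p1_def using pne less.prems by simp
    have d1: "\<forall>i<length p1. ?d (p1 ! i) = i"
    proof (intro allI impI)
      fix i assume "i < length p1"
      then consider "i < length p" | "i = length p" unfolding p1_def by fastforce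
      then show "?d (p1 ! i) = i"
      proof cases
        case 1 then show ?thesis using less.prems(4) unfolding p1_def by (simp add: nth_append)
      next
        case 2 then show ?thesis using c unfolding p1_def k_def using pne by simp
      qed
    qed
    show ?thesis
    proof (cases "c \<in> S")
      case True
      show ?thesis by (rule step[OF w1 h1 _ d1]) (use True in \<open>auto simp: p1_def\<close>)
    next
      case False
      have "card ((nbrs E c \<inter> S) - {u}) = 1" using iii[OF c(1)] c du uS False by simp
      then obtain w where "w \<in> (nbrs E c \<inter> S) - {u}" by (metis card_1_singletonE singletonI)
      then have ew: "{c,w} \<in> E" and wS: "w \<in> S" and wu: "w \<noteq> u" unfolding nbrs_def by auto
      have ecu: "{c,u} \<in> E" using c by (simp add: insert_commute)
      have "\<not> ?d w \<le> ?d c" using Kc[OF ecu ew] wu c du by auto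
      moreover have "?d w \<le> ?d c + 1" using Dup[OF ew] .
      ultimately have dw: "?d w = k + 2" using c by simp
      define p2 where "p2 = p1 @ [w]"
      have w2: "gwalk E p2" unfolding p2_def using walk_append[of E p1 "[w]"] w1 ew p1_def by simp
      have h2: "hd p2 = l" unfolding p2_def using h1 gwalk_nonempty[OF w1] by simp
      have d2: "\<forall>i<length p2. ?d (p2 ! i) = i"
      proof (intro allI impI)
        fix i assume "i < length p2"
        then consider "i < length p1" | "i = length p1" unfolding p2_def by fastforce
        then show "?d (p2 ! i) = i"
        proof cases
          case 1 then show ?thesis using d1 unfolding p2_def by (simp add: nth_append)
        next
          case 2 then show ?thesis using dw unfolding p2_def p1_def k_def using pne by (simp add: nth_append)
        qed
      qed
      show ?thesis by (rule step[OF w2 h2 _ d2]) (use wS in \<open>auto simp: p2_def p1_def\<close>)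
    qed
  qed
qed

end


theorem mainTheorem9:
  fixes V :: "'a set" and E :: "'a set set" and S :: "'a set"
  assumes tree: "is_tree V E"
    and three: "card V \<ge> 3"
    and SV: "S \<subseteq> V"
    and I: "\<exists>l\<in>S. is_leaf V E l"
    and II: "\<forall>l\<in>S. is_leaf V E l \<longrightarrow>
       (\<forall>a b. {a, b} \<in> E \<and> gdist E l a < gdist E l b \<longrightarrow>
          (a \<notin> S \<and> b \<notin> S \<longrightarrow> nbrs E b \<inter> S = {}) \<and>
          (a \<notin> S \<and> b \<in> S \<longrightarrow> card (nbrs E b \<inter> S) \<le> 1) \<and>
          (a \<in> S \<and> b \<notin> S \<longrightarrow> card ((nbrs E b \<inter> S) - {a}) = 1) \<and>
          (a \<in> S \<and> b \<in> S \<longrightarrow> card ((nbrs E b \<inter> S) - {a}) = 0))"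
  shows "\<forall>v\<in>S. \<exists>l l' p. l \<in> S \<and> l' \<in> S \<and> is_leaf V E l \<and> is_leaf V E l' \<and> l \<noteq> l' \<and>
           gpath E p \<and> hd p = l \<and> last p = l' \<and> v \<in> set p"
proof
  fix v assume vS: "v \<in> S"
  obtain l where lS: "l \<in> S" and ll: "is_leaf V E l" using I by blast
  have sg: "simple_graph V E" and con: "gconnected V E" and ac: "gacyclic E"
    using tree unfolding is_tree_def by auto
  have iii: "\<And>a b. {a,b} \<in> E \<Longrightarrow> gdist E l a < gdist E l b \<Longrightarrow> a \<in> S \<Longrightarrow> b \<notin> S
               \<Longrightarrow> card ((nbrs E b \<inter> S) - {a}) = 1"
    using II lS ll by blast
  have vV: "v \<in> V" using vS SV by blast
  obtain p0 where p0: "gwalk E p0" "hd p0 = l" "last p0 = v"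
    using reach[OF sg con ac SV lS ll iii vV] by blast
  obtain P where P: "gwalk E P" "hd P = l" "last P = v" "length P = Suc (gdist E l v)"
    using D1[OF p0] by blast
  have dP: "\<forall>i<length P. gdist E l (P ! i) = i"
    using Dgeo[OF P(1,2)] P by simp
  have PS: "last P \<in> S" using P vS by simp
  obtain q where q: "gwalk E q" "hd q = l" "is_leaf V E (last q)" "last q \<in> S"
     "\<forall>i<length q. gdist E l (q ! i) = i" "length q \<ge> 2" "set P \<subseteq> set q"
    using extend[OF sg con ac SV lS ll iii P(1,2) PS dP] by blast
  have dq: "distinct q" using lenbound[OF sg con ac SV lS ll iii q(1,2,5)] by simp
  have qne: "q \<noteq> []" using q(6) by auto
  have "gdist E l (last q) = length q - 1" using q(5) qne last_conv_nth[of q] by simp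
  then have "gdist E l (last q) \<noteq> 0" using q(6) by simp
  then have neq: "l \<noteq> last q" using D0[of E l] by auto
  have "v \<in> set P" using P gwalk_nonempty[OF P(1)] by auto
  then have "v \<in> set q" using q(7) by blast
  then show "\<exists>l l' p. l \<in> S \<and> l' \<in> S \<and> is_leaf V E l \<and> is_leaf V E l' \<and> l \<noteq> l' \<and>
           gpath E p \<and> hd p = l \<and> last p = l' \<and> v \<in> set p"
    using lS ll q neq dq unfolding gpath_def by blast
qed


end
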